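(* Let $d\ge1$, $k\ge1$, $\sigma>0$, and let $g:\mathcal X\times\mathbb R^d\to\mathbb R^d$ be such that for every $x\in\mathcal X$ the map $\theta\mapsto g(x,\theta)$ is Lipschitz continuous and $\|g(x,\theta)\|_2=1$ for all $x,\theta$. For a dataset $X$ let $F(X,\theta)=\sum_{x\in X}g(x,\theta)$. Let $X$ be a dataset, $x'\in\mathcal X$ and $X'=X\cup\{x'\}$. For an initial $\theta\in\mathbb R^d$, the $k$-wise adaptive composition of the Gaussian mechanism on a dataset $Z\in\{X,X'\}$ outputs $(t_1,\dots,t_k)\in(\mathbb R^d)^k$ where $t_1\sim\mathcal N(F(Z,\theta),\sigma^2I_d)$ and, conditionally on $t_{j-1}$, $t_j\sim\mathcal N(F(Z,t_{j-1}),\sigma^2I_d)$ for $2\le j\le k$; let $f_Z(\cdot;\theta)$ be its density on $\mathbb R^{kd}$. Define for Borel $S\subseteq\mathbb R$ $$\widetilde\omega(S,\theta)=\int_{\{t\in\mathbb R^{kd}:\,\log\frac{f_{X'}(t;\theta)}{f_X(t;\theta)}\in S\}}f_{X'}(t;\theta)\,dt .$$ Let $\omega$ be the privacy loss distribution of the $k$-wise non-adaptive composition of the one-dimensional Gaussian mechanism with sensitivity exactly $1$, i.e. $\omega(S)=\Pr_{u}\big(\sum_{j=1}^k\log\frac{\varphi(u_j-1)}{\varphi(u_j)}\in S\big)$ where $u_1,\dots,u_k$ are i.i.d. $\mathcal N(1,\sigma^2)$ and $\varphi$ is the density of $\mathcal N(0,\sigma^2)$. Then for all $\theta\in\mathbb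 R^d$ and all Borel $S\subseteq\mathbb R$, $\widetilde\omega(S,\theta)=\omega(S)$.
   Context: $\widetilde\omega(\cdot,\theta)$ is the privacy loss distribution (distribution of the privacy loss $\log(f_{X'}/f_X)$ under $f_{X'}$) of the adaptive composition. *)

theory Defs
  imports "HOL-Probability.Probability"
begin

definition F_sum :: "('x \<Rightarrow> 'a \<Rightarrow> 'a::euclidean_space) \<Rightarrow> 'x multiset \<Rightarrow> 'a \<Rightarrow> 'a" where
  "F_sum g Z \<theta> = sum_mset (image_mset (\<lambda>x. g x \<theta>) Z)"

text \<open>Density of N(0, sigma^2 I_d) on the euclidean space 'a (d = DIM('a)), w.r.t. lborel.\<close>
definition gauss_density :: "real \<Rightarrow> 'a::euclidean_space \<Rightarrow> real" where
  "gauss_density \<sigma> y = (\<Prod>b\<in>Basis. normal_density 0 \<sigma> (y \<bullet> b))"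

text \<open>Density of the k-wise adaptive composition of the Gaussian mechanism on dataset Z,
  started at \<theta>: outputs t 0, ..., t (k-1), with t 0 ~ N(F(Z,\<theta>), sigma^2 I) and
  t j ~ N(F(Z, t (j-1)), sigma^2 I) given t (j-1).\<close>
definition adaptive_density ::
  "('x \<Rightarrow> 'a \<Rightarrow> 'a::euclidean_space) \<Rightarrow> real \<Rightarrow> nat \<Rightarrow> 'x multiset \<Rightarrow> 'a \<Rightarrow> (nat \<Rightarrow> 'a) \<Rightarrow> real" where
  "adaptive_density g \<sigma> k Z \<theta> t =
     (\<Prod>j<k. gauss_density \<sigma> (t j - F_sum g Z (if j = 0 then \<theta> else t (j - 1))))"

definition omega_tilde ::
  "('x \<Rightarrow> 'a \<Rightarrow> 'a::euclidean_space) \<Rightarrow> real \<Rightarrow> nat \<Rightarrow> 'x multiset \<Rightarrow> 'x \<Rightarrow> real set \<Rightarrow> 'a \<Rightarrow> ennreal" where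
  "omega_tilde g \<sigma> k X x' S \<theta> =
     (\<integral>\<^sup>+ t \<in> {t \<in> space (PiM {..<k} (\<lambda>_. lborel)).
          ln (adaptive_density g \<sigma> k (add_mset x' X) \<theta> t / adaptive_density g \<sigma> k X \<theta> t) \<in> S}.
        ennreal (adaptive_density g \<sigma> k (add_mset x' X) \<theta> t) \<partial>(PiM {..<k} (\<lambda>_. lborel)))"

definition omega :: "real \<Rightarrow> nat \<Rightarrow> real set \<Rightarrow> ennreal" where
  "omega \<sigma> k S =
     emeasure (PiM {..<k} (\<lambda>_. density lborel (normal_density 1 \<sigma>)))
       {u \<in> space (PiM {..<k} (\<lambda>_. density lborel (normal_density 1 \<sigma>))).
          (\<Sum>j<k. ln (normal_density 0 \<sigma> (u j - 1) / normal_density 0 \<sigma> (u j))) \<in> S}"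

end

theory Submission imports Defs begin

lemma PiM_density_prod:
  fixes d :: "'i \<Rightarrow> real \<Rightarrow> real"
  assumes fin: "finite I" and meas[measurable]: "\<And>i. d i \<in> borel_measurable borel" and nn: "\<And>i x. 0 \<le> d i x"
  shows "density (PiM I (\<lambda>_. lborel)) (\<lambda>f. \<Prod>i\<in>I. ennreal (d i (f i))) = PiM I (\<lambda>i. density lborel (d i))"
proof -
  interpret P: product_sigma_finite "\<lambda>i. density lborel (d i)"
    unfolding product_sigma_finite_def
  proof
    fix i show "sigma_finite_measure (density lborel (\<lambda>x. ennreal (d i x)))"
      by (subst sigma_finite_measure.sigma_finite_iff_density_finite[OF sigma_finite_lborel]) auto
  qed
  interpret L: product_sigma_finite "\<lambda>i::'i. (lborel :: real measure)"
    unfolding product_sigma_finite_def by (auto intro: sigma_finite_lborel)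
  show ?thesis
  proof (rule P.PiM_eqI[OF fin])
    show "sets (density (PiM I (\<lambda>_. lborel)) (\<lambda>f. \<Prod>i\<in>I. ennreal (d i (f i)))) = sets (PiM I (\<lambda>i. density lborel (d i)))"
      by (auto intro!: sets_PiM_cong)
  next
    fix A assume A: "\<And>i. i \<in> I \<Longrightarrow> A i \<in> sets (density lborel (d i))"
    then have A': "\<And>i. i \<in> I \<Longrightarrow> A i \<in> sets borel" by auto
    have "emeasure (density (PiM I (\<lambda>_. lborel)) (\<lambda>f. \<Prod>i\<in>I. ennreal (d i (f i)))) (Pi\<^sub>E I A)
        = (\<integral>\<^sup>+ f. (\<Prod>i\<in>I. ennreal (d i (f i))) * indicator (Pi\<^sub>E I A) f \<partial>PiM I (\<lambda>_. lborel))"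
      using A' by (subst emeasure_density) (auto intro!: sets_PiM_I_finite fin)
    also have "\<dots> = (\<integral>\<^sup>+ f. (\<Prod>i\<in>I. ennreal (d i (f i)) * indicator (A i) (f i)) \<partial>PiM I (\<lambda>_. lborel))"
      by (intro nn_integral_cong) (auto simp: prod.distrib indicator_def space_PiM PiE_def prod_zero_iff fin Pi_iff)
    also have "\<dots> = (\<Prod>i\<in>I. (\<integral>\<^sup>+ x. ennreal (d i x) * indicator (A i) x \<partial>lborel))"
      using A' by (intro L.product_nn_integral_prod fin) auto
    also have "\<dots> = (\<Prod>i\<in>I. emeasure (density lborel (d i)) (A i))"
      using A' by (intro prod.cong refl) (simp add: emeasure_density)
    finally show "emeasure (density (PiM I (\<lambda>_. lborel)) (\<lambda>f. \<Prod>i\<in>I. ennreal (d i (f i)))) (Pi\<^sub>E I A) = (\<Prod>i\<in>I. emeasure (density lborel (d i)) (A i))" .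
  qed
qed


lemma measurable_gauss_density[measurable]:
  "(gauss_density \<sigma> :: 'a::euclidean_space \<Rightarrow> real) \<in> borel_measurable borel"
  unfolding gauss_density_def by measurable

lemma inner_sum_Basis_comp:
  fixes b :: "'a::euclidean_space"
  assumes "b \<in> Basis"
  shows "(\<Sum>c\<in>Basis. f c *\<^sub>R c) \<bullet> b = f b"
  using assms by (simp add: inner_sum_left inner_Basis if_distrib cong: if_cong)

lemma density_gauss_eq:
  fixes \<sigma> :: real
  shows "density lborel (\<lambda>x. ennreal (gauss_density \<sigma> (x::'a::euclidean_space)))
       = distr (PiM Basis (\<lambda>_. density lborel (normal_density 0 \<sigma>))) borel (\<lambda>f. \<Sum>b\<in>Basis. f b *\<^sub>R b)"
proof -
  have eq: "(lborel::'a measure) = distr (\<Pi>\<^sub>M b\<in>Basis. lborel) borel (\<lambda>f. \<Sum>b\<in>Basis. f b *\<^sub>R b)"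
    by (rule lborel_eq)
  have "density lborel (\<lambda>x. ennreal (gauss_density \<sigma> (x::'a)))
      = density (distr (\<Pi>\<^sub>M b\<in>(Basis::'a set). lborel) borel (\<lambda>f. \<Sum>b\<in>Basis. f b *\<^sub>R b)) (\<lambda>x. ennreal (gauss_density \<sigma> (x::'a)))"
    by (subst eq) (rule refl)
  also have "\<dots> = distr (density (\<Pi>\<^sub>M b\<in>(Basis::'a set). lborel) (\<lambda>f. ennreal (gauss_density \<sigma> (\<Sum>b\<in>Basis. f b *\<^sub>R b)))) borel (\<lambda>f. \<Sum>b\<in>Basis. f b *\<^sub>R b)"
    by (rule density_distr) measurable
  also have "density (\<Pi>\<^sub>M b\<in>(Basis::'a set). lborel) (\<lambda>f. ennreal (gauss_density \<sigma> (\<Sum>b\<in>Basis. f b *\<^sub>R b)))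
      = density (\<Pi>\<^sub>M b\<in>(Basis::'a set). lborel) (\<lambda>f. \<Prod>b\<in>Basis. ennreal (normal_density 0 \<sigma> (f b)))"
    by (intro density_cong) (auto simp: gauss_density_def inner_sum_Basis_comp prod_ennreal cong: prod.cong)
  also have "\<dots> = PiM Basis (\<lambda>_. density lborel (normal_density 0 \<sigma>))"
    by (rule PiM_density_prod) auto
  finally show ?thesis .
qed


lemma proj_normal:
  fixes u :: "'a::euclidean_space" and \<sigma> :: real
  assumes sp: "\<sigma> > 0" and nu: "norm u = 1"
  defines "N0 \<equiv> density lborel (normal_density 0 \<sigma>)"
  defines "Q \<equiv> PiM (Basis::'a set) (\<lambda>_. N0)"
  defines "Xv \<equiv> (\<lambda>b f. if b \<in> (Basis::'a set) then (f b::real) else 0)"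
  defines "I \<equiv> {b\<in>(Basis::'a set). b \<bullet> u \<noteq> 0}"
  shows "distributed Q lborel (\<lambda>f. \<Sum>b\<in>I. (b \<bullet> u) * Xv b f) (normal_density 0 \<sigma>)"
proof -
  have pN0: "prob_space N0" unfolding N0_def using sp by (rule prob_space_normal_density)
  interpret PP: product_prob_space "\<lambda>_::'a. N0" "Basis::'a set"
    using pN0 by (simp add: product_prob_space_def product_sigma_finite_def product_prob_space_axioms_def
      prob_space_imp_sigma_finite)
  interpret Q: prob_space Q unfolding Q_def by (rule prob_space_PiM) (rule pN0)
  have setsN0[simp]: "sets N0 = sets borel" unfolding N0_def by simp
  have rv: "Q.random_variable borel (Xv b)" for b
  proof (cases "b \<in> Basis")
    case True
    have "(\<lambda>f. f b) \<in> measurable Q N0" by (simp add: Q_def measurable_component_singleton True)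
    then have "(\<lambda>f. f b) \<in> measurable Q borel" using measurable_cong_sets[OF refl setsN0] by blast
    then show ?thesis using True by (simp add: Xv_def)
  qed (simp add: Xv_def)
  have comp: "distr Q borel (Xv b) = N0" if b: "b \<in> Basis" for b
  proof -
    have "distr Q borel (Xv b) = distr Q N0 (\<lambda>\<omega>. \<omega> b)"
      by (rule distr_cong) (auto simp: Xv_def b)
    also have "\<dots> = N0" unfolding Q_def by (rule PP.PiM_component[OF b])
    finally show ?thesis .
  qed
  have ind0: "Q.indep_vars (\<lambda>_. borel) Xv Basis"
  proof (subst Q.indep_vars_iff_distr_eq_PiM)
    show "Basis \<noteq> {}" by simp
    show "Q.random_variable borel (Xv b)" for b by (rule rv)
    have "distr Q (PiM Basis (\<lambda>_. borel)) (\<lambda>x. \<lambda>b\<in>Basis. Xv b x) = distr Q (PiM Basis (\<lambda>_. borel)) (\<lambda>x. x)"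
      by (rule distr_cong) (auto simp: Xv_def Q_def space_PiM restrict_def extensional_def PiE_def fun_eq_iff)
    also have "\<dots> = Q"
      by (rule distr_id2) (unfold Q_def, rule sets_PiM_cong, auto)
    also have "\<dots> = PiM Basis (\<lambda>b. distr Q borel (Xv b))"
      unfolding Q_def by (rule PiM_cong) (auto simp: comp[unfolded Q_def])
    finally show "distr Q (PiM Basis (\<lambda>_. borel)) (\<lambda>x. \<lambda>b\<in>Basis. Xv b x) = PiM Basis (\<lambda>b. distr Q borel (Xv b))" .
  qed
  have ind: "Q.indep_vars (\<lambda>_. borel) (\<lambda>b f. (b \<bullet> u) * Xv b f) I"
    using Q.indep_vars_compose2[OF ind0, where Y="\<lambda>b x. (b \<bullet> u) * x" and N="\<lambda>_. borel"]
    by (auto intro: Q.indep_vars_subset simp: I_def)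
  have dist0: "distributed Q lborel (Xv b) (normal_density 0 \<sigma>)" if b: "b \<in> Basis" for b
  proof -
    have "distr Q lborel (Xv b) = distr Q borel (Xv b)" by (rule distr_cong) auto
    then show ?thesis using comp[OF b] rv unfolding distributed_def N0_def by simp
  qed
  have dist1: "distributed Q lborel (\<lambda>f. (b \<bullet> u) * Xv b f) (normal_density 0 (\<bar>b \<bullet> u\<bar> * \<sigma>))"
    if b: "b \<in> I" for b
    using Q.normal_density_affine[OF dist0[of b] sp, where \<alpha>="b \<bullet> u" and \<beta>=0] b by (simp add: I_def)
  have Ine: "I \<noteq> {}"
  proof
    assume "I = {}"
    then have "\<forall>b\<in>Basis. u \<bullet> b = 0" by (auto simp: I_def inner_commute)
    then have "u = 0" by (metis euclidean_all_zero_iff)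
    with nu show False by simp
  qed
  have "(\<Sum>b\<in>I. (\<bar>b \<bullet> u\<bar> * \<sigma>)\<^sup>2) = \<sigma>\<^sup>2 * (\<Sum>b\<in>I. (b \<bullet> u)\<^sup>2)"
    by (simp add: sum_distrib_left power_mult_distrib mult.commute)
  also have "(\<Sum>b\<in>I. (b \<bullet> u)\<^sup>2) = (\<Sum>b\<in>Basis. (b \<bullet> u)\<^sup>2)"
    by (rule sum.mono_neutral_left) (auto simp: I_def)
  also have "\<dots> = u \<bullet> u"
    by (subst euclidean_inner) (simp add: power2_eq_square inner_commute)
  also have "\<dots> = 1" using nu by (simp add: power2_norm_eq_inner[symmetric])
  finally have sq: "sqrt (\<Sum>b\<in>I. (\<bar>b \<bullet> u\<bar> * \<sigma>)\<^sup>2) = \<sigma>" using sp by simp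
  have "distributed Q lborel (\<lambda>f. \<Sum>b\<in>I. (b \<bullet> u) * Xv b f)
      (normal_density (\<Sum>b\<in>I. 0) (sqrt (\<Sum>b\<in>I. (\<bar>b \<bullet> u\<bar> * \<sigma>)\<^sup>2)))"
    by (rule Q.sum_indep_normal[OF _ Ine ind _ dist1]) (auto simp: I_def sp)
  then show ?thesis by (simp add: sq)
qed

lemma key_proj:
  fixes u :: "'a::euclidean_space" and \<sigma> :: real and \<phi> :: "real \<Rightarrow> ennreal"
  assumes sp: "\<sigma> > 0" and nu: "norm u = 1" and phim[measurable]: "\<phi> \<in> borel_measurable borel"
  shows "(\<integral>\<^sup>+ w. ennreal (gauss_density \<sigma> w) * \<phi> (w \<bullet> u) \<partial>lborel)
       = (\<integral>\<^sup>+ v. ennreal (normal_density 0 \<sigma> v) * \<phi> v \<partial>lborel)"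
proof -
  define Q where "Q \<equiv> PiM (Basis::'a set) (\<lambda>_. density lborel (normal_density 0 \<sigma>))"
  define Xv where "Xv \<equiv> (\<lambda>b f. if b \<in> (Basis::'a set) then (f b::real) else 0)"
  define I where "I \<equiv> {b\<in>(Basis::'a set). b \<bullet> u \<noteq> 0}"
  have D: "distributed Q lborel (\<lambda>f. \<Sum>b\<in>I. (b \<bullet> u) * Xv b f) (normal_density 0 \<sigma>)"
    unfolding Q_def Xv_def I_def by (rule proj_normal[OF sp nu])
  have "(\<integral>\<^sup>+ w. ennreal (gauss_density \<sigma> w) * \<phi> (w \<bullet> u) \<partial>lborel)
      = (\<integral>\<^sup>+ w. \<phi> (w \<bullet> u) \<partial>density lborel (\<lambda>x. ennreal (gauss_density \<sigma> (x::'a))))"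
    by (subst nn_integral_density) auto
  also have "\<dots> = (\<integral>\<^sup>+ f. \<phi> ((\<Sum>b\<in>Basis. f b *\<^sub>R b) \<bullet> u) \<partial>Q)"
    unfolding density_gauss_eq Q_def by (subst nn_integral_distr) auto
  also have "\<dots> = (\<integral>\<^sup>+ f. \<phi> (\<Sum>b\<in>I. (b \<bullet> u) * Xv b f) \<partial>Q)"
  proof (rule nn_integral_cong)
    fix f assume "f \<in> space Q"
    have "(\<Sum>b\<in>Basis. f b *\<^sub>R b) \<bullet> u = (\<Sum>b\<in>Basis. (b \<bullet> u) * Xv b f)"
      by (simp add: inner_sum_left Xv_def mult.commute)
    also have "\<dots> = (\<Sum>b\<in>I. (b \<bullet> u) * Xv b f)"
      by (rule sum.mono_neutral_right) (auto simp: I_def)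
    finally show "\<phi> ((\<Sum>b\<in>Basis. f b *\<^sub>R b) \<bullet> u) = \<phi> (\<Sum>b\<in>I. (b \<bullet> u) * Xv b f)" by simp
  qed
  also have "\<dots> = (\<integral>\<^sup>+ v. ennreal (normal_density 0 \<sigma> v) * \<phi> v \<partial>lborel)"
    by (rule distributed_nn_integral[OF D, symmetric]) simp
  finally show ?thesis .
qed


lemma gauss_density_eq:
  fixes y :: "'a::euclidean_space"
  shows "gauss_density \<sigma> y = (1 / sqrt (2 * pi * \<sigma>\<^sup>2)) ^ DIM('a) * exp (- (norm y)\<^sup>2 / (2 * \<sigma>\<^sup>2))"
proof -
  have "(\<Sum>b\<in>Basis. (y \<bullet> b)\<^sup>2) = y \<bullet> y"
    by (simp add: euclidean_inner[of y y] power2_eq_square)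
  then have "(\<Sum>b\<in>Basis. (y \<bullet> b)\<^sup>2) = (norm y)\<^sup>2"
    by (simp add: power2_norm_eq_inner)
  then have "(\<Sum>b\<in>Basis. - (y \<bullet> b)\<^sup>2 / (2 * \<sigma>\<^sup>2)) = - (norm y)\<^sup>2 / (2 * \<sigma>\<^sup>2)"
    by (simp add: sum_negf sum_divide_distrib[symmetric])
  moreover have "(\<Prod>b\<in>Basis. exp (- (y \<bullet> b)\<^sup>2 / (2 * \<sigma>\<^sup>2))) = exp (\<Sum>b\<in>Basis. - (y \<bullet> b)\<^sup>2 / (2 * \<sigma>\<^sup>2))"
    by (simp add: exp_sum)
  ultimately have "(\<Prod>b\<in>Basis. exp (- (y \<bullet> b)\<^sup>2 / (2 * \<sigma>\<^sup>2))) = exp (- (norm y)\<^sup>2 / (2 * \<sigma>\<^sup>2))"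
    by simp
  then show ?thesis
    unfolding gauss_density_def normal_density_def
    by (simp only: prod.distrib prod_constant diff_zero)
qed

lemma gauss_density_pos: "\<sigma> > 0 \<Longrightarrow> gauss_density \<sigma> y > 0"
  unfolding gauss_density_def by (auto intro!: prod_pos normal_density_pos)

lemma ln_gauss_ratio:
  fixes w e :: "'a::euclidean_space"
  assumes sp: "\<sigma> > 0" and ne: "norm e = 1"
  shows "ln (gauss_density \<sigma> w / gauss_density \<sigma> (w + e)) = (2 * (w \<bullet> e) + 1) / (2 * \<sigma>\<^sup>2)"
proof -
  have ee: "e \<bullet> e = 1" using ne by (metis one_power2 power2_norm_eq_inner)
  have n: "(norm (w + e))\<^sup>2 = (norm w)\<^sup>2 + 2 * (w \<bullet> e) + 1"
    using ee by (simp add: power2_norm_eq_inner inner_add_left inner_add_right inner_commute)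
  have "gauss_density \<sigma> w / gauss_density \<sigma> (w + e)
      = exp (- (norm w)\<^sup>2 / (2 * \<sigma>\<^sup>2)) / exp (- (norm (w + e))\<^sup>2 / (2 * \<sigma>\<^sup>2))"
    unfolding gauss_density_eq using sp by simp
  also have "\<dots> = exp ((2 * (w \<bullet> e) + 1) / (2 * \<sigma>\<^sup>2))"
    unfolding exp_diff[symmetric] n by (rule arg_cong[where f=exp]) (use sp in \<open>simp add: field_simps\<close>)
  finally show ?thesis by simp
qed

lemma inner_step:
  fixes a e :: "'a::euclidean_space" and \<Phi> :: "real \<Rightarrow> ennreal"
  assumes sp: "\<sigma> > 0" and ne: "norm e = 1" and [measurable]: "\<Phi> \<in> borel_measurable borel"
  shows "(\<integral>\<^sup>+ y. ennreal (gauss_density \<sigma> (y - (e + a))) *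
            \<Phi> (c + ln (gauss_density \<sigma> (y - (e + a)) / gauss_density \<sigma> (y - a))) \<partial>lborel)
       = (\<integral>\<^sup>+ v. ennreal (normal_density 0 \<sigma> v) * \<Phi> (c + (2 * v + 1) / (2 * \<sigma>\<^sup>2)) \<partial>lborel)"
proof -
  let ?f = "\<lambda>y. ennreal (gauss_density \<sigma> (y - (e + a))) *
            \<Phi> (c + ln (gauss_density \<sigma> (y - (e + a)) / gauss_density \<sigma> (y - a)))"
  have "(\<integral>\<^sup>+ y. ?f y \<partial>lborel) = (\<integral>\<^sup>+ y. ?f y \<partial>distr lborel borel ((+) (e + a)))"
    by (simp add: lborel_distr_plus)
  also have "\<dots> = (\<integral>\<^sup>+ w. ?f ((e + a) + w) \<partial>lborel)"
    by (subst nn_integral_distr) auto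
  also have "\<dots> = (\<integral>\<^sup>+ w. ennreal (gauss_density \<sigma> w) * \<Phi> (c + (2 * (w \<bullet> e) + 1) / (2 * \<sigma>\<^sup>2)) \<partial>lborel)"
  proof (rule nn_integral_cong)
    fix w :: 'a
    have "(e + a + w) - a = w + e" by simp
    then show "?f ((e + a) + w) = ennreal (gauss_density \<sigma> w) * \<Phi> (c + (2 * (w \<bullet> e) + 1) / (2 * \<sigma>\<^sup>2))"
      using ln_gauss_ratio[OF sp ne, of w] by (simp add: add.commute)
  qed
  also have "\<dots> = (\<integral>\<^sup>+ v. ennreal (normal_density 0 \<sigma> v) * \<Phi> (c + (2 * v + 1) / (2 * \<sigma>\<^sup>2)) \<partial>lborel)"
    by (rule key_proj[OF sp ne, where \<phi>="\<lambda>v. \<Phi> (c + (2 * v + 1) / (2 * \<sigma>\<^sup>2))"]) measurable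
  finally show ?thesis .
qed


definition prv :: "'a \<Rightarrow> nat \<Rightarrow> (nat \<Rightarrow> 'a) \<Rightarrow> 'a" where
  "prv \<theta> j t = (if j = 0 then \<theta> else t (j - 1))"

lemma prv_upd: "j \<le> k \<Longrightarrow> prv \<theta> j (x(k := y)) = prv \<theta> j x"
  by (auto simp: prv_def)

lemma comp_meas_lborel:
  assumes "j \<in> I"
  shows "(\<lambda>t. t j) \<in> measurable (PiM I (\<lambda>_. lborel::'a::euclidean_space measure)) borel"
proof -
  have "(\<lambda>t. t j) \<in> measurable (PiM I (\<lambda>_. lborel::'a measure)) lborel"
    using assms by (rule measurable_component_singleton)
  then show ?thesis using measurable_cong_sets[OF refl sets_lborel] by blast
qed

lemma meas_prv:
  fixes h :: "'a::euclidean_space \<Rightarrow> 'a \<Rightarrow> 'b::topological_space"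
  assumes h: "(\<lambda>(p,y). h p y) \<in> borel_measurable (borel \<Otimes>\<^sub>M borel)" and j: "j < n"
  shows "(\<lambda>t. h (prv \<theta> j t) (t j)) \<in> borel_measurable (PiM {..<n} (\<lambda>_. lborel))"
proof (rule measurable_Pair_compose_split[OF h])
  show "(\<lambda>t. t j) \<in> measurable (PiM {..<n} (\<lambda>_. lborel::'a measure)) borel"
    using j by (intro comp_meas_lborel) auto
  show "(\<lambda>t. prv \<theta> j t) \<in> measurable (PiM {..<n} (\<lambda>_. lborel::'a measure)) borel"
  proof (cases "j = 0")
    case True then show ?thesis by (simp add: prv_def)
  next
    case False
    then have "(\<lambda>t. t (j - 1)) \<in> measurable (PiM {..<n} (\<lambda>_. lborel::'a measure)) borel"
      using j by (intro comp_meas_lborel) auto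
    then show ?thesis using False by (simp add: prv_def)
  qed
qed

lemma comp_meas_dens:
  assumes "j \<in> I" and h: "h \<in> borel_measurable borel"
  shows "(\<lambda>u. h (u j)) \<in> borel_measurable (PiM I (\<lambda>_. density lborel d))"
proof -
  have "(\<lambda>t. t j) \<in> measurable (PiM I (\<lambda>_. density lborel d)) (density lborel d)"
    using assms(1) by (rule measurable_component_singleton)
  moreover have "h \<in> borel_measurable (density lborel d)"
    using h by simp
  ultimately show ?thesis by (rule measurable_compose)
qed

lemma hh_eq:
  assumes sp: "\<sigma> > 0"
  shows "ln (normal_density 0 \<sigma> (u - 1) / normal_density 0 \<sigma> u) = (2 * u - 1) / (2 * \<sigma>\<^sup>2)"
proof -
  have "normal_density 0 \<sigma> (u - 1) / normal_density 0 \<sigma> u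
      = exp (- (u - 1)\<^sup>2 / (2 * \<sigma>\<^sup>2)) / exp (- u\<^sup>2 / (2 * \<sigma>\<^sup>2))"
    unfolding normal_density_def using sp by simp
  also have "\<dots> = exp ((2 * u - 1) / (2 * \<sigma>\<^sup>2))"
    unfolding exp_diff[symmetric] by (rule arg_cong[where f=exp]) (use sp in \<open>simp add: field_simps power2_eq_square\<close>)
  finally show ?thesis by simp
qed


lemma gen:
  fixes Fa Fb e :: "'a::euclidean_space \<Rightarrow> 'a" and \<Phi> :: "real \<Rightarrow> ennreal" and \<sigma> :: real
  assumes sp: "\<sigma> > 0" and Fam[measurable]: "Fa \<in> borel_measurable borel"
    and Fbm[measurable]: "Fb \<in> borel_measurable borel"
    and Fab: "\<And>p. Fa p = e p + Fb p" and en: "\<And>p. norm (e p) = 1"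
    and \<Phi>m: "\<Phi> \<in> borel_measurable borel"
  shows "(\<integral>\<^sup>+ t. ennreal (\<Prod>j<k. gauss_density \<sigma> (t j - Fa (prv \<theta> j t))) *
            \<Phi> (\<Sum>j<k. ln (gauss_density \<sigma> (t j - Fa (prv \<theta> j t)) / gauss_density \<sigma> (t j - Fb (prv \<theta> j t))))
          \<partial>PiM {..<k} (\<lambda>_. lborel))
       = (\<integral>\<^sup>+ u. \<Phi> (\<Sum>j<k. ln (normal_density 0 \<sigma> (u j - 1) / normal_density 0 \<sigma> (u j)))
          \<partial>PiM {..<k} (\<lambda>_. density lborel (normal_density 1 \<sigma>)))"
  using \<Phi>m
proof (induction k arbitrary: \<Phi>)
  case 0
  then show ?case by (simp add: PiM_empty)
next
  case (Suc k \<Phi>)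
  note [measurable] = Suc.prems
  let ?G = "\<lambda>p y. gauss_density \<sigma> (y - Fa p)"
  let ?ell = "\<lambda>p y. ln (gauss_density \<sigma> (y - Fa p) / gauss_density \<sigma> (y - Fb p))"
  let ?hh = "\<lambda>u. ln (normal_density 0 \<sigma> (u - 1) / normal_density 0 \<sigma> u)"
  let ?N1 = "density lborel (normal_density 1 \<sigma>)"
  define \<Psi> where "\<Psi> c = (\<integral>\<^sup>+ v. ennreal (normal_density 0 \<sigma> v) * \<Phi> (c + (2 * v + 1) / (2 * \<sigma>\<^sup>2)) \<partial>lborel)" for c
  have \<Psi>m: "\<Psi> \<in> borel_measurable borel" unfolding \<Psi>_def by measurable
  interpret L: product_sigma_finite "\<lambda>_::nat. lborel::'a measure"
    unfolding product_sigma_finite_def by (auto intro: sigma_finite_lborel)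
  have pN1: "prob_space ?N1" using sp by (rule prob_space_normal_density)
  interpret N: product_sigma_finite "\<lambda>_::nat. ?N1"
    unfolding product_sigma_finite_def using pN1 by (auto intro: prob_space_imp_sigma_finite)
  have mG: "(\<lambda>(p,y). ?G p y) \<in> borel_measurable (borel \<Otimes>\<^sub>M borel)" by measurable
  have mE: "(\<lambda>(p,y). ?ell p y) \<in> borel_measurable (borel \<Otimes>\<^sub>M borel)" by measurable
  have m1: "(\<lambda>t. \<Prod>j<Suc k. ?G (prv \<theta> j t) (t j)) \<in> borel_measurable (PiM {..<Suc k} (\<lambda>_. lborel))"
    by (rule borel_measurable_prod) (rule meas_prv[OF mG], simp)
  have m2: "(\<lambda>t. \<Sum>j<Suc k. ?ell (prv \<theta> j t) (t j)) \<in> borel_measurable (PiM {..<Suc k} (\<lambda>_. lborel))"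
    by (rule borel_measurable_sum) (rule meas_prv[OF mE], simp)
  have m3: "(\<lambda>u. \<Sum>j<Suc k. ?hh (u j)) \<in> borel_measurable (PiM {..<Suc k} (\<lambda>_. ?N1))"
    by (rule borel_measurable_sum) (rule comp_meas_dens, simp, measurable)
  have eqP: "\<And>M. PiM {..<Suc k} M = PiM (insert k {..<k}) M" by (simp add: lessThan_Suc)
  have "(\<integral>\<^sup>+ t. ennreal (\<Prod>j<Suc k. ?G (prv \<theta> j t) (t j)) * \<Phi> (\<Sum>j<Suc k. ?ell (prv \<theta> j t) (t j)) \<partial>PiM {..<Suc k} (\<lambda>_. lborel))
      = (\<integral>\<^sup>+ x. (\<integral>\<^sup>+ y. ennreal (\<Prod>j<Suc k. ?G (prv \<theta> j (x(k:=y))) ((x(k:=y)) j)) * \<Phi> (\<Sum>j<Suc k. ?ell (prv \<theta> j (x(k:=y))) ((x(k:=y)) j)) \<partial>lborel) \<partial>PiM {..<k} (\<lambda>_. lborel))"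
  proof -
    have mf: "(\<lambda>t. ennreal (\<Prod>j<Suc k. ?G (prv \<theta> j t) (t j)) * \<Phi> (\<Sum>j<Suc k. ?ell (prv \<theta> j t) (t j))) \<in> borel_measurable (PiM {..<Suc k} (\<lambda>_. lborel))"
      using m1 m2 by measurable
    show ?thesis unfolding eqP by (rule L.product_nn_integral_insert[OF _ _ mf[unfolded eqP]]) auto
  qed
  also have "\<dots> = (\<integral>\<^sup>+ x. ennreal (\<Prod>j<k. ?G (prv \<theta> j x) (x j)) * \<Psi> (\<Sum>j<k. ?ell (prv \<theta> j x) (x j)) \<partial>PiM {..<k} (\<lambda>_. lborel))"
  proof (rule nn_integral_cong)
    fix x :: "nat \<Rightarrow> 'a"
    let ?A = "\<Prod>j<k. ?G (prv \<theta> j x) (x j)"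
    let ?S = "\<Sum>j<k. ?ell (prv \<theta> j x) (x j)"
    let ?p = "prv \<theta> k x"
    have pr: "(\<Prod>j<Suc k. ?G (prv \<theta> j (x(k:=y))) ((x(k:=y)) j)) = ?A * ?G ?p y" for y
      by (auto simp: prv_upd intro!: prod.cong)
    have su: "(\<Sum>j<Suc k. ?ell (prv \<theta> j (x(k:=y))) ((x(k:=y)) j)) = ?S + ?ell ?p y" for y
      by (auto simp: prv_upd intro!: sum.cong)
    have Anon: "?A \<ge> 0" by (rule prod_nonneg) (auto intro!: less_imp_le gauss_density_pos sp)
    have Gnon: "?G ?p y \<ge> 0" for y by (auto intro!: less_imp_le gauss_density_pos sp)
    have "(\<integral>\<^sup>+ y. ennreal (\<Prod>j<Suc k. ?G (prv \<theta> j (x(k:=y))) ((x(k:=y)) j)) * \<Phi> (\<Sum>j<Suc k. ?ell (prv \<theta> j (x(k:=y))) ((x(k:=y)) j)) \<partial>lborel)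
        = (\<integral>\<^sup>+ y. ennreal ?A * (ennreal (?G ?p y) * \<Phi> (?S + ?ell ?p y)) \<partial>lborel)"
      by (intro nn_integral_cong) (simp only: pr su, simp add: ennreal_mult[OF Anon Gnon] mult.assoc)
    also have "\<dots> = ennreal ?A * (\<integral>\<^sup>+ y. ennreal (?G ?p y) * \<Phi> (?S + ?ell ?p y) \<partial>lborel)"
      by (rule nn_integral_cmult) measurable
    also have "(\<integral>\<^sup>+ y. ennreal (?G ?p y) * \<Phi> (?S + ?ell ?p y) \<partial>lborel) = \<Psi> ?S"
      unfolding \<Psi>_def Fab by (rule inner_step[OF sp en]) measurable
    finally show "(\<integral>\<^sup>+ y. ennreal (\<Prod>j<Suc k. ?G (prv \<theta> j (x(k:=y))) ((x(k:=y)) j)) * \<Phi> (\<Sum>j<Suc k. ?ell (prv \<theta> j (x(k:=y))) ((x(k:=y)) j)) \<partial>lborel)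
        = ennreal ?A * \<Psi> ?S" .
  qed
  also have "\<dots> = (\<integral>\<^sup>+ u. \<Psi> (\<Sum>j<k. ?hh (u j)) \<partial>PiM {..<k} (\<lambda>_. ?N1))"
    by (rule Suc.IH[OF \<Psi>m])
  also have "\<dots> = (\<integral>\<^sup>+ x. (\<integral>\<^sup>+ y. \<Phi> (\<Sum>j<Suc k. ?hh ((x(k:=y)) j)) \<partial>?N1) \<partial>PiM {..<k} (\<lambda>_. ?N1))"
  proof (rule nn_integral_cong)
    fix x :: "nat \<Rightarrow> real"
    let ?S = "\<Sum>j<k. ?hh (x j)"
    have su: "(\<Sum>j<Suc k. ?hh ((x(k:=y)) j)) = ?S + ?hh y" for y
      by (auto intro!: sum.cong)
    have "(\<integral>\<^sup>+ y. \<Phi> (\<Sum>j<Suc k. ?hh ((x(k:=y)) j)) \<partial>?N1)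
        = (\<integral>\<^sup>+ y. ennreal (normal_density 1 \<sigma> y) * \<Phi> (?S + ?hh y) \<partial>lborel)"
      unfolding su by (subst nn_integral_density) auto
    also have "\<dots> = (\<integral>\<^sup>+ y. ennreal (normal_density 1 \<sigma> y) * \<Phi> (?S + ?hh y) \<partial>distr lborel borel ((+) 1))"
      by (simp add: lborel_distr_plus)
    also have "\<dots> = (\<integral>\<^sup>+ v. ennreal (normal_density 1 \<sigma> (1 + v)) * \<Phi> (?S + ?hh (1 + v)) \<partial>lborel)"
      by (subst nn_integral_distr) auto
    also have "\<dots> = \<Psi> ?S"
      unfolding \<Psi>_def
    proof (rule nn_integral_cong)
      fix v :: real
      have "normal_density 1 \<sigma> (1 + v) = normal_density 0 \<sigma> v" by (simp add: normal_density_def)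
      moreover have "?hh (1 + v) = (2 * v + 1) / (2 * \<sigma>\<^sup>2)"
        using hh_eq[OF sp, of "1 + v"] by simp
      ultimately show "ennreal (normal_density 1 \<sigma> (1 + v)) * \<Phi> (?S + ?hh (1 + v)) =
          ennreal (normal_density 0 \<sigma> v) * \<Phi> (?S + (2 * v + 1) / (2 * \<sigma>\<^sup>2))" by simp
    qed
    finally show "\<Psi> ?S = (\<integral>\<^sup>+ y. \<Phi> (\<Sum>j<Suc k. ?hh ((x(k:=y)) j)) \<partial>?N1)" by simp
  qed
  also have "\<dots> = (\<integral>\<^sup>+ u. \<Phi> (\<Sum>j<Suc k. ?hh (u j)) \<partial>PiM {..<Suc k} (\<lambda>_. ?N1))"
  proof -
    have mf: "(\<lambda>u. \<Phi> (\<Sum>j<Suc k. ?hh (u j))) \<in> borel_measurable (PiM {..<Suc k} (\<lambda>_. ?N1))"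
      using m3 by measurable
    show ?thesis unfolding eqP by (rule N.product_nn_integral_insert[OF _ _ mf[unfolded eqP], symmetric]) auto
  qed
  finally show ?case .
qed


lemma F_sum_cont:
  assumes "\<And>x. continuous_on UNIV (g x)"
  shows "continuous_on UNIV (F_sum g Z)"
proof (induction Z)
  case empty
  have "F_sum g {#} = (\<lambda>_. 0)" by (simp add: F_sum_def fun_eq_iff)
  then show ?case by simp
next
  case (add x Z)
  have "F_sum g (add_mset x Z) = (\<lambda>\<theta>. g x \<theta> + F_sum g Z \<theta>)" by (simp add: F_sum_def fun_eq_iff)
  then show ?case using add assms by (auto intro!: continuous_on_add)
qed

theorem mainTheorem10:
  fixes g :: "'x \<Rightarrow> 'a::euclidean_space \<Rightarrow> 'a"
    and \<sigma> :: real and k :: nat and X :: "'x multiset" and x' :: 'x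
    and \<theta> :: 'a and S :: "real set"
  assumes "k \<ge> 1" and "\<sigma> > 0"
    and "\<And>x. \<exists>C. C-lipschitz_on UNIV (g x)"
    and "\<And>x \<theta>. norm (g x \<theta>) = 1"
    and "S \<in> sets borel"
  shows "omega_tilde g \<sigma> k X x' S \<theta> = omega \<sigma> k S"
proof -
  note sp = assms(2)
  have cont: "continuous_on UNIV (g x)" for x
    using assms(3)[of x] lipschitz_on_continuous_on by blast
  have Fm: "F_sum g Z \<in> borel_measurable borel" for Z
    by (rule borel_measurable_continuous_onI) (rule F_sum_cont[OF cont])
  have Fab: "F_sum g (add_mset x' X) p = g x' p + F_sum g X p" for p
    by (simp add: F_sum_def)
  have Sm[measurable]: "S \<in> sets borel" by fact
  have im: "indicator S \<in> borel_measurable borel" by measurable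
  let ?Fa = "F_sum g (add_mset x' X)"
  let ?Fb = "F_sum g X"
  let ?P = "PiM {..<k} (\<lambda>_. lborel::'a measure)"
  let ?N1 = "PiM {..<k} (\<lambda>_. density lborel (normal_density 1 \<sigma>))"
  let ?L = "\<lambda>t. \<Sum>j<k. ln (gauss_density \<sigma> (t j - ?Fa (prv \<theta> j t)) / gauss_density \<sigma> (t j - ?Fb (prv \<theta> j t)))"
  let ?H = "\<lambda>u. \<Sum>j<k. ln (normal_density 0 \<sigma> (u j - 1) / normal_density 0 \<sigma> (u j))"
  have gen1: "(\<integral>\<^sup>+ t. ennreal (\<Prod>j<k. gauss_density \<sigma> (t j - ?Fa (prv \<theta> j t))) * indicator S (?L t) \<partial>?P)
      = (\<integral>\<^sup>+ u. indicator S (?H u) \<partial>?N1)"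
    by (rule gen[OF sp Fm Fm Fab assms(4) im])
  have ad: "adaptive_density g \<sigma> k Z \<theta> t = (\<Prod>j<k. gauss_density \<sigma> (t j - F_sum g Z (prv \<theta> j t)))" for Z t
    by (simp add: adaptive_density_def prv_def)
  have gp: "gauss_density \<sigma> y \<noteq> 0" for y :: 'a
    using gauss_density_pos[OF sp, of y] by simp
  have lnL: "ln (adaptive_density g \<sigma> k (add_mset x' X) \<theta> t / adaptive_density g \<sigma> k X \<theta> t) = ?L t" for t
    unfolding ad prod_dividef[symmetric]
    by (rule ln_prod) (use gp in \<open>auto simp del: Fab\<close>)
  have "omega_tilde g \<sigma> k X x' S \<theta>
      = (\<integral>\<^sup>+ t. ennreal (\<Prod>j<k. gauss_density \<sigma> (t j - ?Fa (prv \<theta> j t))) * indicator S (?L t) \<partial>?P)"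
    unfolding omega_tilde_def
    by (intro nn_integral_cong) (simp only: lnL, simp add: ad indicator_def del: Fab)
  also have "\<dots> = (\<integral>\<^sup>+ u. indicator S (?H u) \<partial>?N1)" by (rule gen1)
  also have "\<dots> = omega \<sigma> k S"
  proof -
    have Hm: "?H \<in> borel_measurable ?N1"
      by (rule borel_measurable_sum) (rule comp_meas_dens, simp, measurable)
    have B: "{u \<in> space ?N1. ?H u \<in> S} \<in> sets ?N1"
    proof -
      have "{u \<in> space ?N1. ?H u \<in> S} = ?H -` S \<inter> space ?N1" by auto
      then show ?thesis using measurable_sets[OF Hm Sm] by simp
    qed
    have "(\<integral>\<^sup>+ u. indicator S (?H u) \<partial>?N1) = (\<integral>\<^sup>+ u. indicator {u \<in> space ?N1. ?H u \<in> S} u \<partial>?N1)"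
      by (intro nn_integral_cong) (simp add: indicator_def)
    also have "\<dots> = emeasure ?N1 {u \<in> space ?N1. ?H u \<in> S}"
      by (rule nn_integral_indicator[OF B])
    finally show ?thesis unfolding omega_def .
  qed
  finally show ?thesis .
qed

end
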